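(* Let $\Pi=(\mathsf A,\mathsf B)$ be a protocol. Then for every $c\in(0,\frac12]$ there exists $z=z(c,\Pi)\in\mathbb N$ such that either (1) $\mathbb E_{L_\Pi}[C^{\mathsf A,z}_\Pi]\ge c(1-2c)$ and $\sum_{j=0}^{z-1}\beta_j<c$; or (2) $\mathbb E_{L_\Pi}[C^{\mathsf B,z}_\Pi]\ge c(1-2c)$ and $\sum_{j=0}^{z}\alpha_j<c$, where $\alpha_j=1-\mathrm{Best}_{\mathsf B}(\Pi_{(\mathsf A,j)})$ and $\beta_j=1-\mathrm{Best}_{\mathsf A}(\Pi_{(\mathsf B,j)})$.
   Context: Protocols are $m$-round single-bit-message protocols identified with the complete binary tree of height $m$, with control scheme, edge probabilities $e_\Pi(u,ub)$, output $\chi_\Pi:\text{leaves}\to\{0,1\}$, visit probabilities $v_\Pi(u)$, leaf distribution $L_\Pi$; $\Pi_u$ is the subprotocol under $u$ (or $\perp$ if $v_\Pi(u)=0$); expectations over $L_\perp$ are $0$; $\mathbb E_{L_{\Pi_u}}[M]$ is the expectation of $M$ restricted to leaves under $u$. $\mathsf A$-dominated measure $M^{\mathsf A}_\Pi$: for a 0-round protocol with leaf $\ell$, $M^{\mathsf A}_\Pi(\ell)=\chi_\Pi(\ell)$; otherwise for a leaf with first bit $b$, with $\mu_c=\mathbb E_{L_{\Pi_c}}[M^{\mathsf A}_{\Pi_c}]$: value $0$ if $e_\Pi(\lambda,b)=0$; $M^{\mathsf A}_{\Pi_b}(\ell)$ if $e_\Pi(\lambda,b)=1$, or if $e_\Pi(\lambda,b)\in(0,1)$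 and ($\mathsf A$ controls the root or $\mu_b\le\mu_{1-b}$); $\frac{\mu_{1-b}}{\mu_b}M^{\mathsf A}_{\Pi_b}(\ell)$ otherwise. $M^{\mathsf B}_\Pi$ is defined identically with $\mathsf A,\mathsf B$ exchanged and base case $1-\chi_\Pi(\ell)$; $M^{\mathsf A}_\perp,M^{\mathsf B}_\perp$ are zero. Conditional protocol: for $\mathbb E_{L_\Pi}[M]<1$, $\Pi|_M$ keeps control and output and has $e_{\Pi|_M}(u,ub)=0$ if $\mathbb E_{L_{\Pi_u}}[M]=1$, else $e_\Pi(u,ub)\frac{1-\mathbb E_{L_{\Pi_{ub}}}[M]}{1-\mathbb E_{L_{\Pi_u}}[M]}$; $\Pi|_M=\perp$ if $\mathbb E_{L_\Pi}[M]=1$ or $\Pi=\perp$. Sequence: $\Pi_{(\mathsf A,0)}=\Pi$, $\Pi_{(\mathsf B,j)}=\Pi_{(\mathsf A,j)}|_{M^{\mathsf A}_{\Pi_{(\mathsf A,j)}}}$, $\Pi_{(\mathsf A,j+1)}=\Pi_{(\mathsf B,j)}|_{M^{\mathsf B}_{\Pi_{(\mathsf B,j)}}}$. $C^{\mathsf A,z}_\Pi=\sum_{j=0}^z M^{\mathsf A}_{\Pi_{(\mathsf A,j)}}\prod_{t<j}(1-M^{\mathsf A}_{\Pi_{(\mathsf A,t)}})$ and $C^{\mathsf B,z}_\Pi=\sum_{j=0}^z M^{\mathsf B}_{\Pi_{(\mathsf B,j)}}\prod_{t<j}(1-M^{\mathsf B}_{\Pi_{(\mathsf B,t)}})$. $\mathrm{Best}_{\mathsf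 A}(\Pi')$ ($\mathrm{Best}_{\mathsf B}(\Pi')$) is the maximal probability of output $1$ (resp. $0$) achievable by a deterministic attacker for $\mathsf A$ (resp. $\mathsf B$) that only sends messages with positive probability in $\Pi'$, against the honest other party; $\mathrm{Best}_{\mathsf A}(\perp)=\mathrm{Best}_{\mathsf B}(\perp)=1$. *)

theory Defs
  imports Complex_Main
begin

text \<open>
An m-round single-bit-message protocol, identified with the complete binary tree of
height m.  Nodes are bit lists (True = bit 1) of length at most m; leaves are the
bit lists of length exactly m.
  ctrlA u  : party A controls node u (otherwise B does);
  edge u b : the edge probability e(u, ub);
  outp l   : the output chi(l) of leaf l (True = 1).
The empty protocol (bottom) is represented by None in the type proto option.
\<close>

record proto =
  rounds :: nat
  ctrlA  :: "bool list \<Rightarrow> bool"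
  edge   :: "bool list \<Rightarrow> bool \<Rightarrow> real"
  outp   :: "bool list \<Rightarrow> bool"

definition is_protocol :: "proto \<Rightarrow> bool" where
  "is_protocol P \<longleftrightarrow> (\<forall>u b. length u < rounds P \<longrightarrow>
      0 \<le> edge P u b \<and> edge P u True + edge P u False = 1)"

definition leaves :: "proto \<Rightarrow> bool list set" where
  "leaves P = {l. length l = rounds P}"

definition vprob :: "proto \<Rightarrow> bool list \<Rightarrow> real" where
  "vprob P u = (\<Prod>i<length u. edge P (take i u) (u ! i))"

definition expect :: "proto option \<Rightarrow> (bool list \<Rightarrow> real) \<Rightarrow> real" where
  "expect Q M = (case Q of None \<Rightarrow> 0
      | Some P \<Rightarrow> (\<Sum>l\<in>leaves P. vprob P l * M l))"

definition sub :: "proto \<Rightarrow> bool list \<Rightarrow> proto option" where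
  "sub P u = (if vprob P u = 0 then None else
     Some \<lparr> rounds = rounds P - length u,
            ctrlA = (\<lambda>v. ctrlA P (u @ v)),
            edge = (\<lambda>v. edge P (u @ v)),
            outp = (\<lambda>v. outp P (u @ v)) \<rparr>)"

definition subo :: "proto option \<Rightarrow> bool list \<Rightarrow> proto option" where
  "subo Q u = (case Q of None \<Rightarrow> None | Some P \<Rightarrow> sub P u)"

definition subE :: "proto option \<Rightarrow> bool list \<Rightarrow> (bool list \<Rightarrow> real) \<Rightarrow> real" where
  "subE Q u M = expect (subo Q u) (\<lambda>l. M (u @ l))"

text \<open>Dominated measures.  The boolean isA selects M^A (True) or M^B (False);
the nat argument is fuel equal to the number of rounds.\<close>
primrec domf :: "bool \<Rightarrow> nat \<Rightarrow> proto option \<Rightarrow> bool list \<Rightarrow> real" where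
  "domf isA 0 Q l = (case Q of None \<Rightarrow> 0
      | Some P \<Rightarrow> (if outp P l = isA then 1 else 0))"
| "domf isA (Suc n) Q l = (case Q of None \<Rightarrow> 0
      | Some P \<Rightarrow>
        (let b = hd l;
             mu = (\<lambda>c. expect (sub P [c]) (domf isA n (sub P [c])));
             e = edge P [] b;
             Mb = domf isA n (sub P [b]) (tl l)
         in if e = 0 then 0
            else if e = 1 then Mb
            else if 0 < e \<and> e < 1 \<and> (ctrlA P [] = isA \<or> mu b \<le> mu (\<not> b)) then Mb
            else mu (\<not> b) / mu b * Mb))"

definition dom_measure :: "bool \<Rightarrow> proto option \<Rightarrow> bool list \<Rightarrow> real" where
  "dom_measure isA Q = domf isA (case Q of None \<Rightarrow> 0 | Some P \<Rightarrow> rounds P) Q"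

abbreviation "MA \<equiv> dom_measure True"
abbreviation "MB \<equiv> dom_measure False"

definition cond :: "proto option \<Rightarrow> (bool list \<Rightarrow> real) \<Rightarrow> proto option" where
  "cond Q M = (case Q of None \<Rightarrow> None
     | Some P \<Rightarrow> (if expect Q M = 1 then None else
         Some (P\<lparr> edge := (\<lambda>u b. if subE Q u M = 1 then 0
                  else edge P u b * (1 - subE Q (u @ [b]) M) / (1 - subE Q u M)) \<rparr>)))"

primrec pseq :: "proto option \<Rightarrow> nat \<Rightarrow> proto option \<times> proto option" where
  "pseq Q 0 = (Q, cond Q (MA Q))"
| "pseq Q (Suc j) = (let a = cond (snd (pseq Q j)) (MB (snd (pseq Q j)))
                     in (a, cond a (MA a)))"

definition PiA :: "proto option \<Rightarrow> nat \<Rightarrow> proto option" where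
  "PiA Q j = fst (pseq Q j)"
definition PiB :: "proto option \<Rightarrow> nat \<Rightarrow> proto option" where
  "PiB Q j = snd (pseq Q j)"

definition CA :: "proto option \<Rightarrow> nat \<Rightarrow> bool list \<Rightarrow> real" where
  "CA Q z l = (\<Sum>j\<le>z. MA (PiA Q j) l * (\<Prod>t<j. 1 - MA (PiA Q t) l))"
definition CB :: "proto option \<Rightarrow> nat \<Rightarrow> bool list \<Rightarrow> real" where
  "CB Q z l = (\<Sum>j\<le>z. MB (PiB Q j) l * (\<Prod>t<j. 1 - MB (PiB Q t) l))"

text \<open>A deterministic attacker for party A (isA = True) or B
(isA = False) is a map sigma from nodes (= transcripts so far) to the bit it sends.\<close>
definition aedge :: "proto \<Rightarrow> bool \<Rightarrow> (bool list \<Rightarrow> bool) \<Rightarrow> bool list \<Rightarrow> bool \<Rightarrow> real" where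
  "aedge P isA \<sigma> u b = (if ctrlA P u = isA then (if \<sigma> u = b then 1 else 0) else edge P u b)"

definition avis :: "proto \<Rightarrow> bool \<Rightarrow> (bool list \<Rightarrow> bool) \<Rightarrow> bool list \<Rightarrow> real" where
  "avis P isA \<sigma> u = (\<Prod>i<length u. aedge P isA \<sigma> (take i u) (u ! i))"

definition valid_attacker :: "proto \<Rightarrow> bool \<Rightarrow> (bool list \<Rightarrow> bool) \<Rightarrow> bool" where
  "valid_attacker P isA \<sigma> \<longleftrightarrow> (\<forall>u. length u < rounds P \<longrightarrow> ctrlA P u = isA \<longrightarrow>
       avis P isA \<sigma> u > 0 \<longrightarrow> edge P u (\<sigma> u) > 0)"

text \<open>probability that the attacked execution outputs isA (1 for A, 0 for B)\<close>
definition attack_value :: "proto \<Rightarrow> bool \<Rightarrow> (bool list \<Rightarrow> bool) \<Rightarrow> real" where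
  "attack_value P isA \<sigma> = (\<Sum>l\<in>leaves P. avis P isA \<sigma> l * (if outp P l = isA then 1 else 0))"

definition Best :: "bool \<Rightarrow> proto option \<Rightarrow> real" where
  "Best isA Q = (case Q of None \<Rightarrow> 1
     | Some P \<Rightarrow> (SUP \<sigma>\<in>{\<sigma>. valid_attacker P isA \<sigma>}. attack_value P isA \<sigma>))"

abbreviation "BestA \<equiv> Best True"
abbreviation "BestB \<equiv> Best False"

end

theory Submission
  imports Defs
begin



definition pf :: "(bool list \<Rightarrow> bool \<Rightarrow> real) \<Rightarrow> bool list \<Rightarrow> bool list \<Rightarrow> real" where
  "pf g u l = (\<Prod>i<length l. g (u @ take i l) (l ! i))"

lemma pf_Nil[simp]: "pf g u [] = 1"
  by (simp add: pf_def)

lemma pf_Cons: "pf g u (c # l) = g u c * pf g (u @ [c]) l"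
  unfolding pf_def by (subst length_Cons, subst prod.lessThan_Suc_shift) simp

lemma pf_append: "pf g u (v @ w) = pf g u v * pf g (u @ v) w"
  by (induction v arbitrary: u) (simp_all add: pf_Cons)

lemma pf_single[simp]: "pf g u [c] = g u c"
  by (simp add: pf_Cons)

lemma vprob_pf: "vprob P u = pf (edge P) [] u"
  by (simp add: vprob_def pf_def)

lemma avis_pf: "avis P isA s u = pf (aedge P isA s) [] u"
  by (simp add: avis_def pf_def)

lemma pf_shift: "pf (\<lambda>v. g (w @ v)) u l = pf g (w @ u) l"
  by (simp add: pf_def)

lemma pf_nonneg:
  assumes "\<And>v b. length v < length l \<Longrightarrow> 0 \<le> g (u @ v) b"
  shows "0 \<le> pf g u l"
  unfolding pf_def by (rule prod_nonneg) (use assms in auto)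

lemma finite_len: "finite {l :: bool list. length l = n}"
proof -
  have "{l :: bool list. length l = n} = {xs. set xs \<subseteq> UNIV \<and> length xs = n}" by simp
  then show ?thesis using finite_lists_length_eq[of "UNIV :: bool set" n] by simp
qed

lemma len_Suc_eq: "{l :: bool list. length l = Suc n} =
   Cons True ` {l. length l = n} \<union> Cons False ` {l. length l = n}"
proof (rule set_eqI)
  fix l :: "bool list"
  show "l \<in> {l. length l = Suc n} \<longleftrightarrow> l \<in> Cons True ` {l. length l = n} \<union> Cons False ` {l. length l = n}"
    by (cases l) auto
qed

lemma sum_len_Suc:
  "(\<Sum>l\<in>{l :: bool list. length l = Suc n}. f l) =
   (\<Sum>l\<in>{l. length l = n}. f (True # l)) + (\<Sum>l\<in>{l. length l = n}. f (False # l))"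
proof -
  have d: "Cons True ` {l. length l = n} \<inter> Cons False ` {l :: bool list. length l = n} = {}" by auto
  show ?thesis
    unfolding len_Suc_eq
    by (subst sum.union_disjoint) (auto simp: finite_len d sum.reindex)
qed

definition EV :: "(bool list \<Rightarrow> bool \<Rightarrow> real) \<Rightarrow> nat \<Rightarrow> bool list \<Rightarrow> (bool list \<Rightarrow> real) \<Rightarrow> real" where
  "EV g n u f = (\<Sum>l\<in>{l. length l = n}. pf g u l * f l)"

lemma EV_0[simp]: "EV g 0 u f = f []"
  by (simp add: EV_def)

lemma EV_Suc: "EV g (Suc n) u f =
   g u True * EV g n (u @ [True]) (\<lambda>l. f (True # l)) + g u False * EV g n (u @ [False]) (\<lambda>l. f (False # l))"
  unfolding EV_def sum_len_Suc by (simp add: pf_Cons sum_distrib_left mult.assoc)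

lemma EV_cong: "(\<And>l. length l = n \<Longrightarrow> f l = f' l) \<Longrightarrow> EV g n u f = EV g n u f'"
  unfolding EV_def by (rule sum.cong) auto

lemma EV_cong_g: "(\<And>v b. length v < n \<Longrightarrow> g (u @ v) b = g' (u @ v) b) \<Longrightarrow> EV g n u f = EV g' n u f"
  unfolding EV_def pf_def
  by (rule sum.cong) (auto intro!: prod.cong)

lemma EV_mult: "EV g n u (\<lambda>l. k * f l) = k * EV g n u f"
  unfolding EV_def by (simp add: sum_distrib_left ac_simps)

lemma EV_add: "EV g n u (\<lambda>l. f l + h l) = EV g n u f + EV g n u h"
  unfolding EV_def by (simp add: distrib_left sum.distrib)

lemma EV_diff: "EV g n u (\<lambda>l. f l - h l) = EV g n u f - EV g n u h"
  unfolding EV_def by (simp add: right_diff_distrib sum_subtractf)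

lemma EV_sum: "EV g n u (\<lambda>l. \<Sum>j\<in>J. f j l) = (\<Sum>j\<in>J. EV g n u (f j))"
  unfolding EV_def by (simp add: sum_distrib_left sum.swap[of _ J])

lemma EV_mono:
  assumes "\<And>v b. length v < n \<Longrightarrow> 0 \<le> g (u @ v) b"
    and "\<And>l. length l = n \<Longrightarrow> f l \<le> h l"
  shows "EV g n u f \<le> EV g n u h"
  unfolding EV_def
  by (rule sum_mono) (use assms in \<open>auto intro!: mult_left_mono pf_nonneg\<close>)

lemma EV_nonneg:
  assumes "\<And>v b. length v < n \<Longrightarrow> 0 \<le> g (u @ v) b"
    and "\<And>l. length l = n \<Longrightarrow> 0 \<le> f l"
  shows "0 \<le> EV g n u f"
  using EV_mono[of n g u "\<lambda>_. 0" f] assms by (simp add: EV_def)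

lemma EV_le1:
  assumes "\<And>v b. length v < n \<Longrightarrow> 0 \<le> g (u @ v) b"
    and "\<And>v. length v < n \<Longrightarrow> g (u @ v) True + g (u @ v) False \<le> 1"
  shows "EV g n u (\<lambda>_. 1) \<le> 1"
  using assms
proof (induction n arbitrary: u)
  case 0
  then show ?case by simp
next
  case (Suc n)
  have h1: "EV g n (u @ [c]) (\<lambda>_. 1) \<le> 1" for c
    by (rule Suc.IH) (use Suc.prems(1)[of "c # _"] Suc.prems(2)[of "c # _"] in auto)
  have g0: "0 \<le> g u c" for c using Suc.prems(1)[of "[]"] by simp
  have "g u True * EV g n (u @ [True]) (\<lambda>_. 1) \<le> g u True"
    using h1[of True] g0[of True] by (simp add: mult_left_le)
  moreover have "g u False * EV g n (u @ [False]) (\<lambda>_. 1) \<le> g u False"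
    using h1[of False] g0[of False] by (simp add: mult_left_le)
  moreover have "g u True + g u False \<le> 1" using Suc.prems(2)[of "[]"] by simp
  ultimately show ?case by (simp add: EV_Suc)
qed

definition sh :: "proto \<Rightarrow> bool list \<Rightarrow> proto" where
  "sh P u = \<lparr> rounds = rounds P - length u,
            ctrlA = (\<lambda>v. ctrlA P (u @ v)),
            edge = (\<lambda>v. edge P (u @ v)),
            outp = (\<lambda>v. outp P (u @ v)) \<rparr>"

lemma sh_simps[simp]: "rounds (sh P u) = rounds P - length u"
  "ctrlA (sh P u) = (\<lambda>v. ctrlA P (u @ v))" "edge (sh P u) = (\<lambda>v. edge P (u @ v))"
  "outp (sh P u) = (\<lambda>v. outp P (u @ v))"
  by (simp_all add: sh_def)

lemma sub_eq: "sub P u = (if vprob P u = 0 then None else Some (sh P u))"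
  by (simp add: sub_def sh_def)

lemma vprob_single[simp]: "vprob P [c] = edge P [] c"
  by (simp add: vprob_def)

lemma sub_single: "sub P [c] = (if edge P [] c = 0 then None else Some (sh P [c]))"
  by (simp add: sub_eq)

lemma leaves_eq: "leaves P = {l. length l = rounds P}"
  by (simp add: leaves_def)

lemma expect_Some: "expect (Some P) f = EV (edge P) (rounds P) [] f"
  by (simp add: expect_def EV_def leaves_def vprob_pf)

lemma expect_None[simp]: "expect None f = 0"
  by (simp add: expect_def)

lemma EV_shift: "EV (\<lambda>v. g (w @ v)) n u f = EV g n (w @ u) f"
  by (simp only: EV_def pf_shift)

lemma expect_sh: "expect (Some (sh P u)) f = EV (edge P) (rounds P - length u) u f"
  by (simp only: expect_Some sh_simps EV_shift append_Nil2)

lemma subE_eq: "subE (Some P) u M = (if vprob P u = 0 then 0 else EV (edge P) (rounds P - length u) u (\<lambda>l. M (u @ l)))"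
  by (simp add: subE_def subo_def sub_eq expect_sh)

lemma expect_Suc: "rounds P = Suc n \<Longrightarrow> expect (Some P) f =
   edge P [] True * expect (Some (sh P [True])) (\<lambda>l. f (True # l)) +
   edge P [] False * expect (Some (sh P [False])) (\<lambda>l. f (False # l))"
  unfolding expect_sh by (simp add: expect_Some EV_Suc)

lemma domf_None[simp]: "domf isA n None l = 0"
  by (cases n) simp_all

lemma dom_measure_None[simp]: "dom_measure isA None = (\<lambda>l. 0)"
  by (simp add: dom_measure_def fun_eq_iff)




definition wp :: "proto \<Rightarrow> bool" where
  "wp P \<longleftrightarrow> (\<forall>u. length u < rounds P \<longrightarrow> (\<forall>b. 0 \<le> edge P u b) \<and>
      edge P u True + edge P u False \<le> 1 \<and>
      (vprob P u \<noteq> 0 \<longrightarrow> edge P u True + edge P u False = 1))"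

lemma is_protocol_wp: "is_protocol P \<Longrightarrow> wp P"
  by (auto simp: is_protocol_def wp_def)

lemma wp_nonneg: "wp P \<Longrightarrow> length u < rounds P \<Longrightarrow> 0 \<le> edge P u b"
  by (auto simp: wp_def)

lemma wp_le1: "wp P \<Longrightarrow> length u < rounds P \<Longrightarrow> edge P u True + edge P u False \<le> 1"
  by (auto simp: wp_def)

lemma wp_sum1: "wp P \<Longrightarrow> length u < rounds P \<Longrightarrow> vprob P u \<noteq> 0 \<Longrightarrow> edge P u True + edge P u False = 1"
  by (auto simp: wp_def)

lemma wp_root: "wp P \<Longrightarrow> 0 < rounds P \<Longrightarrow> edge P [] True + edge P [] False = 1"
  using wp_sum1[of P "[]"] by (simp add: vprob_def)

lemma wp_edge_le1: "wp P \<Longrightarrow> length u < rounds P \<Longrightarrow> edge P u b \<le> 1"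
  using wp_le1[of P u] wp_nonneg[of P u "\<not>b"] by (cases b) auto

lemma vprob_sh: "vprob (sh P u) v = pf (edge P) u v"
  by (simp only: vprob_pf sh_simps pf_shift append_Nil2)

lemma vprob_append: "vprob P (u @ v) = vprob P u * pf (edge P) u v"
  by (simp add: vprob_pf pf_append)

lemma vprob_snoc: "vprob P (u @ [b]) = vprob P u * edge P u b"
  by (simp add: vprob_append)

lemma wp_sh: assumes "wp P" "vprob P u \<noteq> 0" shows "wp (sh P u)"
  unfolding wp_def
proof (intro allI impI conjI)
  fix v :: "bool list" and b assume "length v < rounds (sh P u)"
  then have l: "length (u @ v) < rounds P" by simp
  show "0 \<le> edge (sh P u) v b" using wp_nonneg[OF assms(1) l] by simp
  show "edge (sh P u) v True + edge (sh P u) v False \<le> 1" using wp_le1[OF assms(1) l] by simp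
  assume "vprob (sh P u) v \<noteq> 0"
  then have "vprob P (u @ v) \<noteq> 0" using assms(2) by (simp add: vprob_append vprob_sh)
  then show "edge (sh P u) v True + edge (sh P u) v False = 1" using wp_sum1[OF assms(1) l] by simp
qed

lemma wp_sh1: "wp P \<Longrightarrow> edge P [] c \<noteq> 0 \<Longrightarrow> wp (sh P [c])"
  by (rule wp_sh) auto

lemma expect_mult: "expect Q (\<lambda>l. k * f l) = k * expect Q f"
  by (cases Q) (simp_all add: expect_Some EV_mult)

lemma expect_nonneg: "wp P \<Longrightarrow> (\<And>l. length l = rounds P \<Longrightarrow> 0 \<le> f l) \<Longrightarrow> 0 \<le> expect (Some P) f"
  unfolding expect_Some by (rule EV_nonneg) (auto intro: wp_nonneg)

lemma expect_mono: "wp P \<Longrightarrow> (\<And>l. length l = rounds P \<Longrightarrow> f l \<le> h l) \<Longrightarrow> expect (Some P) f \<le> expect (Some P) h"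
  unfolding expect_Some by (rule EV_mono) (auto intro: wp_nonneg)

lemma wp_total: "wp P \<Longrightarrow> expect (Some P) (\<lambda>_. 1) = 1"
proof (induction "rounds P" arbitrary: P)
  case 0
  then show ?case by (simp add: expect_Some)
next
  case (Suc n)
  have t: "edge P [] c * expect (Some (sh P [c])) (\<lambda>_. 1) = edge P [] c" for c
  proof (cases "edge P [] c = 0")
    case False
    then have "expect (Some (sh P [c])) (\<lambda>_. 1) = 1"
      using Suc.hyps(1)[of "sh P [c]"] Suc.hyps(2) wp_sh1[OF Suc.prems False] by simp
    then show ?thesis by simp
  qed simp
  have "expect (Some P) (\<lambda>_. 1) = edge P [] True * expect (Some (sh P [True])) (\<lambda>_. 1)
      + edge P [] False * expect (Some (sh P [False])) (\<lambda>_. 1)"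
    by (rule expect_Suc[of P n]) (use Suc.hyps(2) in simp)
  also have "\<dots> = 1" unfolding t using wp_root[OF Suc.prems] Suc.hyps(2) by simp
  finally show ?case .
qed

lemma expect_le1: "wp P \<Longrightarrow> (\<And>l. length l = rounds P \<Longrightarrow> f l \<le> 1) \<Longrightarrow> expect (Some P) f \<le> 1"
  using expect_mono[of P f "\<lambda>_. 1"] wp_total[of P] by simp

definition DD :: "bool \<Rightarrow> proto \<Rightarrow> bool list \<Rightarrow> real" where
  "DD isA P = domf isA (rounds P) (Some P)"

lemma dom_measure_Some: "dom_measure isA (Some P) = DD isA P"
  by (simp add: dom_measure_def DD_def)

definition muD :: "bool \<Rightarrow> proto \<Rightarrow> bool \<Rightarrow> real" where
  "muD isA P c = (if edge P [] c = 0 then 0 else expect (Some (sh P [c])) (DD isA (sh P [c])))"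

lemma DD_0: "rounds P = 0 \<Longrightarrow> DD isA P l = (if outp P l = isA then 1 else 0)"
  by (simp add: DD_def)

lemma DD_Suc: "rounds P = Suc n \<Longrightarrow> DD isA P l =
  (let b = hd l; e = edge P [] b in
   if e = 0 then 0 else if e = 1 then DD isA (sh P [b]) (tl l)
   else if 0 < e \<and> e < 1 \<and> (ctrlA P [] = isA \<or> muD isA P b \<le> muD isA P (\<not> b)) then DD isA (sh P [b]) (tl l)
   else muD isA P (\<not> b) / muD isA P b * DD isA (sh P [b]) (tl l))"
  by (simp add: DD_def sub_single muD_def Let_def)




lemma DD_bounds: "wp P \<Longrightarrow> 0 \<le> DD isA P l \<and> DD isA P l \<le> 1"
proof (induction "rounds P" arbitrary: P l)
  case 0
  then show ?case by (simp add: DD_0)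
next
  case (Suc n)
  have r: "rounds P = Suc n" using Suc.hyps(2) by simp
  have IH: "edge P [] c \<noteq> 0 \<Longrightarrow> 0 \<le> DD isA (sh P [c]) x \<and> DD isA (sh P [c]) x \<le> 1" for c x
    using Suc.hyps(1)[of "sh P [c]"] r wp_sh1[OF Suc.prems] by simp
  have mu0: "0 \<le> muD isA P c" for c
  proof (cases "edge P [] c = 0")
    case False
    then show ?thesis unfolding muD_def
      using expect_nonneg[OF wp_sh1[OF Suc.prems False], of "DD isA (sh P [c])"] IH[OF False] by simp
  qed (simp add: muD_def)
  define b where "b = hd l"
  define e where "e = edge P [] b"
  have e01: "0 \<le> e" "e \<le> 1" unfolding e_def using wp_nonneg[OF Suc.prems, of "[]"] wp_edge_le1[OF Suc.prems, of "[]"] r by auto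
  show ?case
  proof (cases "e = 0")
    case True
    then show ?thesis by (simp add: DD_Suc[OF r] Let_def b_def[symmetric] e_def[symmetric])
  next
    case False
    note ib = IH[of b "tl l", folded e_def, OF False]
    show ?thesis
    proof (cases "e = 1 \<or> (0 < e \<and> e < 1 \<and> (ctrlA P [] = isA \<or> muD isA P b \<le> muD isA P (\<not> b)))")
      case True
      then show ?thesis using ib False by (auto simp add: DD_Suc[OF r] Let_def b_def[symmetric] e_def[symmetric])
    next
      case c2: False
      then have lt: "muD isA P (\<not> b) < muD isA P b" using e01 False by auto
      define q where "q = muD isA P (\<not> b) / muD isA P b"
      have q0: "0 \<le> q" unfolding q_def using mu0[of "\<not>b"] mu0[of b] by simp
      have q1: "q \<le> 1" unfolding q_def using lt mu0[of "\<not>b"] by simp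
      have "DD isA P l = q * DD isA (sh P [b]) (tl l)"
        using c2 False by (auto simp add: DD_Suc[OF r] Let_def b_def[symmetric] e_def[symmetric] q_def)
      then show ?thesis using ib q0 q1 mult_le_one[of q "DD isA (sh P [b]) (tl l)"] by simp
    qed
  qed
qed

lemma muD_nonneg: "wp P \<Longrightarrow> rounds P = Suc n \<Longrightarrow> 0 \<le> muD isA P c"
  unfolding muD_def using expect_nonneg[OF wp_sh1, of P c "DD isA (sh P [c])"] DD_bounds[OF wp_sh1, of P c]
  by auto

lemma expect_DD_nonneg: "wp P \<Longrightarrow> 0 \<le> expect (Some P) (DD isA P)"
  using expect_nonneg[of P "DD isA P"] DD_bounds[of P] by auto

lemma expect_DD_le1: "wp P \<Longrightarrow> expect (Some P) (DD isA P) \<le> 1"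
  using expect_le1[of P "DD isA P"] DD_bounds[of P] by auto

lemma child_term:
  assumes w: "wp P" and r: "rounds P = Suc n"
  shows "edge P [] c * expect (Some (sh P [c])) (\<lambda>l. DD isA P (c # l)) =
     edge P [] c * (if edge P [] c = 1 \<or> ctrlA P [] = isA \<or> muD isA P c \<le> muD isA P (\<not> c)
                    then muD isA P c else muD isA P (\<not> c))"
proof (cases "edge P [] c = 0")
  case False
  have e01: "0 \<le> edge P [] c" "edge P [] c \<le> 1"
    using wp_nonneg[OF w, of "[]"] wp_edge_le1[OF w, of "[]"] r by auto
  have m: "muD isA P c = expect (Some (sh P [c])) (DD isA (sh P [c]))" using False by (simp add: muD_def)
  show ?thesis
  proof (cases "edge P [] c = 1 \<or> ctrlA P [] = isA \<or> muD isA P c \<le> muD isA P (\<not> c)")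
    case True
    then have "DD isA P (c # l) = DD isA (sh P [c]) l" for l
      using False e01 by (auto simp add: DD_Suc[OF r] Let_def)
    then show ?thesis using True m by simp
  next
    case c2: False
    define q where "q = muD isA P (\<not> c) / muD isA P c"
    have "DD isA P (c # l) = q * DD isA (sh P [c]) l" for l
      using False e01 c2 by (auto simp add: DD_Suc[OF r] Let_def q_def)
    then have "expect (Some (sh P [c])) (\<lambda>l. DD isA P (c # l)) = q * muD isA P c"
      using m expect_mult[of "Some (sh P [c])" q "DD isA (sh P [c])"] by simp
    also have "\<dots> = muD isA P (\<not> c)" unfolding q_def using c2 muD_nonneg[OF w r, of isA "\<not>c"] by auto
    finally show ?thesis using c2 by simp
  qed
qed simp

lemma E_root:
  assumes w: "wp P" and r: "rounds P = Suc n"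
  shows "expect (Some P) (DD isA P) =
    (if 0 < edge P [] True \<and> 0 < edge P [] False \<and> ctrlA P [] \<noteq> isA
     then min (muD isA P True) (muD isA P False)
     else edge P [] True * muD isA P True + edge P [] False * muD isA P False)"
proof -
  have s: "edge P [] True + edge P [] False = 1" using wp_root[OF w] r by simp
  have n0: "0 \<le> edge P [] c" for c using wp_nonneg[OF w, of "[]"] r by auto
  have "expect (Some P) (DD isA P) = edge P [] True * expect (Some (sh P [True])) (\<lambda>l. DD isA P (True # l))
      + edge P [] False * expect (Some (sh P [False])) (\<lambda>l. DD isA P (False # l))"
    by (rule expect_Suc[OF r])
  also have "\<dots> = edge P [] True * (if edge P [] True = 1 \<or> ctrlA P [] = isA \<or> muD isA P True \<le> muD isA P False
                    then muD isA P True else muD isA P False)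
             + edge P [] False * (if edge P [] False = 1 \<or> ctrlA P [] = isA \<or> muD isA P False \<le> muD isA P True
                    then muD isA P False else muD isA P True)"
    unfolding child_term[OF w r] by simp
  also have "\<dots> = (if 0 < edge P [] True \<and> 0 < edge P [] False \<and> ctrlA P [] \<noteq> isA
     then min (muD isA P True) (muD isA P False)
     else edge P [] True * muD isA P True + edge P [] False * muD isA P False)"
  proof -
    have F: "edge P [] False = 1 - edge P [] True" using s by simp
    have T01: "0 \<le> edge P [] True" "edge P [] True \<le> 1" using n0[of True] n0[of False] F by auto
    show ?thesis
    proof (cases "edge P [] True = 0 \<or> edge P [] True = 1")
      case True
      then show ?thesis using F by auto
    next
      case False
      then have "0 < edge P [] True" "0 < edge P [] False" "edge P [] True \<noteq> 1" "edge P [] False \<noteq> 1"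
        using T01 F by auto
      have key: "edge P [] True * x + edge P [] False * x = x" for x
        by (metis s distrib_right mult_1)
      show ?thesis using \<open>0 < edge P [] True\<close> \<open>0 < edge P [] False\<close>
        \<open>edge P [] True \<noteq> 1\<close> \<open>edge P [] False \<noteq> 1\<close>
        by (simp only: min_def key if_True if_False split: if_split) (auto simp: key)
    qed
  qed
  finally show ?thesis .
qed




lemma pos_helper:
  fixes T F a1 a2 b1 b2 :: real
  assumes "0 < T" "0 < F" "0 \<le> a1" "0 \<le> a2" "0 \<le> b1" "0 \<le> b2" "0 < a1 + b1" "0 < a2 + b2"
  shows "0 < T * a1 + F * a2 + min b1 b2"
proof -
  have p1: "0 \<le> T * a1" "0 \<le> F * a2" using assms by auto
  have m0: "0 \<le> min b1 b2" using assms by simp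
  show ?thesis
  proof (cases "min b1 b2 = 0")
    case False
    then show ?thesis using p1 m0 by linarith
  next
    case True
    then have "b1 = 0 \<or> b2 = 0" by (auto simp: min_def split: if_splits)
    then have "0 < T * a1 \<or> 0 < F * a2" using assms by auto
    then show ?thesis using p1 True by linarith
  qed
qed

lemma DD_pos: "wp P \<Longrightarrow> 0 < expect (Some P) (DD isA P) + expect (Some P) (DD (\<not> isA) P)"
proof (induction "rounds P" arbitrary: P)
  case 0
  then show ?case by (simp add: expect_Some DD_0)
next
  case (Suc n)
  have r: "rounds P = Suc n" using Suc.hyps(2) by simp
  have IH: "edge P [] c \<noteq> 0 \<Longrightarrow> 0 < muD isA P c + muD (\<not> isA) P c" for c
    using Suc.hyps(1)[of "sh P [c]"] r wp_sh1[OF Suc.prems] by (simp add: muD_def)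
  have nn: "0 \<le> muD x P c" for x c using muD_nonneg[OF Suc.prems r] .
  have s: "edge P [] True + edge P [] False = 1" using wp_root[OF Suc.prems] r by simp
  have e0: "0 \<le> edge P [] c" for c using wp_nonneg[OF Suc.prems, of "[]"] r by auto
  note ER = E_root[OF Suc.prems r]
  show ?case
  proof (cases "0 < edge P [] True \<and> 0 < edge P [] False")
    case True
    then have ne: "edge P [] True \<noteq> 0" "edge P [] False \<noteq> 0" by auto
    show ?thesis
    proof (cases "ctrlA P [] = isA")
      case True
      have "0 < edge P [] True * muD isA P True + edge P [] False * muD isA P False + min (muD (\<not> isA) P True) (muD (\<not> isA) P False)"
        by (rule pos_helper) (use \<open>0 < edge P [] True \<and> 0 < edge P [] False\<close> nn IH[OF ne(1)] IH[OF ne(2)] in auto)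
      then show ?thesis using True \<open>0 < edge P [] True \<and> 0 < edge P [] False\<close> by (simp add: ER)
    next
      case False
      have "0 < edge P [] True * muD (\<not> isA) P True + edge P [] False * muD (\<not> isA) P False + min (muD isA P True) (muD isA P False)"
        by (rule pos_helper) (use \<open>0 < edge P [] True \<and> 0 < edge P [] False\<close> nn IH[OF ne(1)] IH[OF ne(2)] in auto)
      then show ?thesis using False \<open>0 < edge P [] True \<and> 0 < edge P [] False\<close> by (simp add: ER)
    qed
  next
    case False
    then have "(edge P [] True = 0 \<and> edge P [] False = 1) \<or> (edge P [] True = 1 \<and> edge P [] False = 0)"
      using s e0[of True] e0[of False] by auto
    then show ?thesis
    proof
      assume a: "edge P [] True = 0 \<and> edge P [] False = 1"
      then show ?thesis using IH[of False] by (simp add: ER)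
    next
      assume a: "edge P [] True = 1 \<and> edge P [] False = 0"
      then show ?thesis using IH[of True] by (simp add: ER)
    qed
  qed
qed

lemma DD_one: "wp P \<Longrightarrow> 0 < expect (Some P) (DD isA P) \<Longrightarrow>
   \<exists>l. length l = rounds P \<and> vprob P l \<noteq> 0 \<and> DD isA P l = 1"
proof (induction "rounds P" arbitrary: P)
  case 0
  then have "DD isA P [] = 1" by (simp add: expect_Some DD_0 split: if_splits)
  then show ?case using 0 by (auto simp: vprob_def)
next
  case (Suc n)
  have r: "rounds P = Suc n" using Suc.hyps(2) by simp
  have s: "edge P [] True + edge P [] False = 1" using wp_root[OF Suc.prems(1)] r by simp
  have e0: "0 \<le> edge P [] c" for c using wp_nonneg[OF Suc.prems(1), of "[]"] r by auto
  have nn: "0 \<le> muD x P c" for x c using muD_nonneg[OF Suc.prems(1) r] .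
  note ER = E_root[OF Suc.prems(1) r]
  have main: "\<exists>l. length l = rounds P \<and> vprob P l \<noteq> 0 \<and> DD isA P l = 1"
    if ec: "edge P [] c \<noteq> 0" and mc: "0 < muD isA P c"
      and unsc: "edge P [] c = 1 \<or> ctrlA P [] = isA \<or> muD isA P c \<le> muD isA P (\<not> c)" for c
  proof -
    have w': "wp (sh P [c])" using wp_sh1[OF Suc.prems(1) ec] .
    have "0 < expect (Some (sh P [c])) (DD isA (sh P [c]))" using mc ec by (simp add: muD_def)
    from Suc.hyps(1)[of "sh P [c]"] r w' this obtain l where
      l: "length l = n" "vprob (sh P [c]) l \<noteq> 0" "DD isA (sh P [c]) l = 1" by auto
    have e01: "0 < edge P [] c" "edge P [] c \<le> 1" using e0[of c] ec wp_edge_le1[OF Suc.prems(1), of "[]"] r by auto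
    have "DD isA P (c # l) = DD isA (sh P [c]) l"
      using unsc ec e01 by (auto simp add: DD_Suc[OF r] Let_def)
    moreover have "vprob P (c # l) = edge P [] c * vprob (sh P [c]) l"
      unfolding vprob_sh by (simp add: vprob_pf pf_Cons)
    ultimately show ?thesis using l ec r by (intro exI[of _ "c # l"]) auto
  qed
  show ?case
  proof (cases "0 < edge P [] True \<and> 0 < edge P [] False \<and> ctrlA P [] \<noteq> isA")
    case True
    then have "0 < min (muD isA P True) (muD isA P False)" using Suc.prems(2) by (simp add: ER)
    then show ?thesis
    proof (cases "muD isA P True \<le> muD isA P False")
      case True
      then show ?thesis using main[of True] \<open>0 < min _ _\<close> \<open>0 < edge P [] True \<and> _\<close> by (auto simp: min_def)
    next
      case False
      then show ?thesis using main[of False] \<open>0 < min _ _\<close> \<open>0 < edge P [] True \<and> _\<close> by (auto simp: min_def)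
    qed
  next
    case False
    then have pos: "0 < edge P [] True * muD isA P True + edge P [] False * muD isA P False"
      using Suc.prems(2) False unfolding ER by (auto split: if_splits)
    have unsc: "edge P [] c = 1 \<or> ctrlA P [] = isA" if "edge P [] c \<noteq> 0" for c
    proof -
      have "\<not> (0 < edge P [] True \<and> 0 < edge P [] False) \<or> ctrlA P [] = isA" using False by auto
      then show ?thesis using that s e0[of True] e0[of False] by (cases c) auto
    qed
    have "(edge P [] True \<noteq> 0 \<and> 0 < muD isA P True) \<or> (edge P [] False \<noteq> 0 \<and> 0 < muD isA P False)"
    proof (rule ccontr)
      assume "\<not> ?thesis"
      then have a: "edge P [] True = 0 \<or> muD isA P True = 0" "edge P [] False = 0 \<or> muD isA P False = 0"
        using nn[of isA True] nn[of isA False] by auto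
      have "edge P [] True * muD isA P True = 0" using a(1) by auto
      moreover have "edge P [] False * muD isA P False = 0" using a(2) by auto
      ultimately show False using pos by linarith
    qed
    then show ?thesis using main unsc by blast
  qed
qed




primrec att :: "bool \<Rightarrow> nat \<Rightarrow> proto \<Rightarrow> bool list \<Rightarrow> bool" where
  "att isA 0 P u = True"
| "att isA (Suc n) P u = (case u of
      [] \<Rightarrow> (if edge P [] True = 0 then False else if edge P [] False = 0 then True
             else muD (\<not> isA) P True \<le> muD (\<not> isA) P False)
    | c # v \<Rightarrow> att isA n (sh P [c]) v)"

lemma att_0[simp]: "att isA 0 P = (\<lambda>_. True)"
  by (simp add: fun_eq_iff)

lemma aedge_sh: "aedge (sh P [c]) isA (\<lambda>v. s (c # v)) = (\<lambda>v. aedge P isA s ([c] @ v))"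
  by (simp add: aedge_def fun_eq_iff)

lemma AV_EV: "attack_value P isA s = EV (aedge P isA s) (rounds P) [] (\<lambda>l. if outp P l = isA then 1 else 0)"
  by (simp add: attack_value_def EV_def leaves_def avis_pf)

lemma AV_Suc: "rounds P = Suc n \<Longrightarrow> attack_value P isA s =
   aedge P isA s [] True * attack_value (sh P [True]) isA (\<lambda>v. s (True # v)) +
   aedge P isA s [] False * attack_value (sh P [False]) isA (\<lambda>v. s (False # v))"
  unfolding AV_EV aedge_sh EV_shift by (simp add: EV_Suc)

lemma avis_Cons: "avis P isA s (c # v) = aedge P isA s [] c * avis (sh P [c]) isA (\<lambda>v. s (c # v)) v"
  unfolding avis_pf aedge_sh pf_shift by (simp add: pf_Cons)

lemma aedge_nonneg: "wp P \<Longrightarrow> length u < rounds P \<Longrightarrow> 0 \<le> aedge P isA s u b"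
  by (auto simp: aedge_def intro: wp_nonneg)

lemma valid_Suc:
  assumes w: "wp P" and r: "rounds P = Suc n"
    and root: "ctrlA P [] = isA \<Longrightarrow> 0 < edge P [] (s [])"
    and ch: "\<And>c. 0 < aedge P isA s [] c \<Longrightarrow> valid_attacker (sh P [c]) isA (\<lambda>v. s (c # v))"
  shows "valid_attacker P isA s"
  unfolding valid_attacker_def
proof (intro allI impI)
  fix u assume l: "length u < rounds P" and cu: "ctrlA P u = isA" and av: "0 < avis P isA s u"
  show "0 < edge P u (s u)"
  proof (cases u)
    case Nil
    then show ?thesis using root cu by simp
  next
    case (Cons c v)
    have a0: "0 \<le> aedge P isA s [] c" using aedge_nonneg[OF w, of "[]"] r by simp
    have "0 < aedge P isA s [] c * avis (sh P [c]) isA (\<lambda>v. s (c # v)) v"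
      using av Cons avis_Cons by simp
    then have p: "0 < aedge P isA s [] c" "0 < avis (sh P [c]) isA (\<lambda>v. s (c # v)) v"
      using a0 by (auto simp: zero_less_mult_iff)
    have "0 < edge (sh P [c]) v (s (c # v))"
      using ch[OF p(1)] p(2) l cu Cons unfolding valid_attacker_def by auto
    then show ?thesis using Cons by simp
  qed
qed

lemma att_sh: "(\<lambda>v. att isA (Suc n) P (c # v)) = att isA n (sh P [c])"
  by (simp add: fun_eq_iff)

lemma attack_main:
  "wp P \<Longrightarrow> valid_attacker P isA (att isA (rounds P) P) \<and>
     1 - expect (Some P) (DD (\<not> isA) P) \<le> attack_value P isA (att isA (rounds P) P)"
proof (induction "rounds P" arbitrary: P)
  case 0
  have v: "valid_attacker P isA (att isA (rounds P) P)" using 0 by (simp add: valid_attacker_def)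
  show ?case using v 0 by (simp add: expect_Some DD_0 AV_EV)
next
  case (Suc n)
  have r: "rounds P = Suc n" using Suc.hyps(2) by simp
  define s where "s = att isA (Suc n) P"
  have sc: "(\<lambda>v. s (c # v)) = att isA (rounds (sh P [c])) (sh P [c])" for c
    using r by (simp add: s_def fun_eq_iff)
  have IH: "edge P [] c \<noteq> 0 \<Longrightarrow> valid_attacker (sh P [c]) isA (\<lambda>v. s (c # v)) \<and>
      1 - muD (\<not> isA) P c \<le> attack_value (sh P [c]) isA (\<lambda>v. s (c # v))" for c
    unfolding sc using Suc.hyps(1)[of "sh P [c]"] r wp_sh1[OF Suc.prems] by (simp add: muD_def)
  have sum1: "edge P [] True + edge P [] False = 1" using wp_root[OF Suc.prems] r by simp
  have e0: "0 \<le> edge P [] c" for c using wp_nonneg[OF Suc.prems, of "[]"] r by auto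
  define d where "d = s []"
  have d_def': "d = (if edge P [] True = 0 then False else if edge P [] False = 0 then True
             else muD (\<not> isA) P True \<le> muD (\<not> isA) P False)" by (simp add: d_def s_def)
  have ed: "edge P [] d \<noteq> 0"
  proof (cases d)
    case True
    then show ?thesis using sum1 by (auto simp: d_def' split: if_splits)
  next
    case False
    then show ?thesis using sum1 by (auto simp: d_def' split: if_splits)
  qed
  have valid: "valid_attacker P isA s"
  proof (rule valid_Suc[OF Suc.prems r])
    show "0 < edge P [] (s [])" using ed e0[of d] d_def by auto
  next
    fix c assume "0 < aedge P isA s [] c"
    then have "edge P [] c \<noteq> 0" using ed d_def by (auto simp: aedge_def split: if_splits)
    then show "valid_attacker (sh P [c]) isA (\<lambda>v. s (c # v))" using IH by blast
  qed
  note ER = E_root[OF Suc.prems r, of "\<not> isA"]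
  have val: "1 - expect (Some P) (DD (\<not> isA) P) \<le> attack_value P isA s"
  proof (cases "ctrlA P [] = isA")
    case True
    have ae: "aedge P isA s [] c = (if d = c then 1 else 0)" for c using True by (simp add: aedge_def d_def)
    have av: "attack_value P isA s = attack_value (sh P [d]) isA (\<lambda>v. s (d # v))"
      unfolding AV_Suc[OF r] ae by (cases d) simp_all
    have E: "expect (Some P) (DD (\<not> isA) P) = muD (\<not> isA) P d"
    proof (cases "0 < edge P [] True \<and> 0 < edge P [] False")
      case True
      then have "d = (muD (\<not> isA) P True \<le> muD (\<not> isA) P False)" by (simp add: d_def')
      then show ?thesis using True \<open>ctrlA P [] = isA\<close> unfolding ER by (auto simp: min_def)
    next
      case False
      then have "(edge P [] True = 0 \<and> edge P [] False = 1) \<or> (edge P [] True = 1 \<and> edge P [] False = 0)"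
        using sum1 e0[of True] e0[of False] by auto
      then show ?thesis using False unfolding ER by (auto simp: d_def')
    qed
    show ?thesis using IH[OF ed] av E by simp
  next
    case False
    have ae: "aedge P isA s [] c = edge P [] c" for c using False by (simp add: aedge_def)
    have E: "expect (Some P) (DD (\<not> isA) P) = edge P [] True * muD (\<not> isA) P True + edge P [] False * muD (\<not> isA) P False"
      using False unfolding ER by auto
    have t: "edge P [] c * (1 - muD (\<not> isA) P c) \<le> edge P [] c * attack_value (sh P [c]) isA (\<lambda>v. s (c # v))" for c
    proof (cases "edge P [] c = 0")
      case False
      then show ?thesis using IH[OF False] e0[of c] by (intro mult_left_mono) auto
    qed simp
    have "1 - expect (Some P) (DD (\<not> isA) P) = edge P [] True * (1 - muD (\<not> isA) P True) + edge P [] False * (1 - muD (\<not> isA) P False)"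
      unfolding E using sum1 by (simp add: algebra_simps)
    also have "\<dots> \<le> attack_value P isA s"
      unfolding AV_Suc[OF r] ae using t[of True] t[of False] by linarith
    finally show ?thesis .
  qed
  show ?case using valid val r s_def by simp
qed

lemma AV_le1: "wp P \<Longrightarrow> attack_value P isA s \<le> 1"
proof -
  assume w: "wp P"
  have n: "0 \<le> aedge P isA s ([] @ v) b" if "length v < rounds P" for v b
    using aedge_nonneg[OF w] that by simp
  have "attack_value P isA s \<le> EV (aedge P isA s) (rounds P) [] (\<lambda>_. 1)"
    unfolding AV_EV by (rule EV_mono) (use n in auto)
  also have "\<dots> \<le> 1"
  proof (rule EV_le1)
    show "0 \<le> aedge P isA s ([] @ v) b" if "length v < rounds P" for v b using n that .
    show "aedge P isA s ([] @ v) True + aedge P isA s ([] @ v) False \<le> 1" if "length v < rounds P" for v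
      using wp_le1[OF w, of v] that by (auto simp: aedge_def)
  qed
  finally show ?thesis .
qed

lemma Best_ge: "wp P \<Longrightarrow> 1 - expect (Some P) (dom_measure (\<not> isA) (Some P)) \<le> Best isA (Some P)"
proof -
  assume w: "wp P"
  have m: "valid_attacker P isA (att isA (rounds P) P)"
    "1 - expect (Some P) (DD (\<not> isA) P) \<le> attack_value P isA (att isA (rounds P) P)"
    using attack_main[OF w] by auto
  have "attack_value P isA (att isA (rounds P) P) \<le> (SUP s\<in>{s. valid_attacker P isA s}. attack_value P isA s)"
  proof (rule cSUP_upper)
    show "att isA (rounds P) P \<in> {s. valid_attacker P isA s}" using m(1) by simp
    show "bdd_above (attack_value P isA ` {s. valid_attacker P isA s})"
      by (rule bdd_aboveI2[where M=1]) (rule AV_le1[OF w])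
  qed
  then show ?thesis using m(2) by (simp add: Best_def dom_measure_Some)
qed




lemma expect_Some_sum: "expect (Some P) f = (\<Sum>l\<in>leaves P. vprob P l * f l)"
  by (simp add: expect_def)

lemma S_sh: "subE (Some R) u M = (if vprob R u = 0 then 0 else expect (Some (sh R u)) (\<lambda>l. M (u @ l)))"
  by (simp add: subE_def subo_def sub_eq)

lemma S_zero: "vprob R u = 0 \<Longrightarrow> subE (Some R) u M = 0"
  by (simp add: S_sh)

lemma S_nil: "subE (Some R) [] M = expect (Some R) M"
  by (simp add: subE_eq vprob_def expect_Some)

lemma S_bounds:
  assumes w: "wp R" and M: "\<And>l. 0 \<le> M l \<and> M l \<le> 1"
  shows "0 \<le> subE (Some R) u M \<and> subE (Some R) u M \<le> 1"
proof (cases "vprob R u = 0")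
  case False
  have w': "wp (sh R u)" using wp_sh[OF w False] .
  show ?thesis using False expect_nonneg[OF w', of "\<lambda>l. M (u @ l)"] expect_le1[OF w', of "\<lambda>l. M (u @ l)"] M
    by (simp add: S_sh)
qed (simp add: S_zero)

lemma S_leaf: "length l = rounds R \<Longrightarrow> vprob R l \<noteq> 0 \<Longrightarrow> subE (Some R) l M = M l"
  by (simp add: subE_eq)

lemma S_rec:
  assumes w: "wp R" and l: "length u < rounds R" and v: "vprob R u \<noteq> 0"
  shows "subE (Some R) u M = edge R u True * subE (Some R) (u @ [True]) M + edge R u False * subE (Some R) (u @ [False]) M"
proof -
  obtain k where k: "rounds R - length u = Suc k" using l by (metis Suc_diff_Suc)
  have t: "edge R u c * EV (edge R) k (u @ [c]) (\<lambda>x. M (u @ c # x)) = edge R u c * subE (Some R) (u @ [c]) M" for c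
  proof (cases "edge R u c = 0")
    case False
    then have "vprob R (u @ [c]) \<noteq> 0" using v by (simp add: vprob_snoc)
    moreover have "rounds R - length (u @ [c]) = k" using k by simp
    ultimately show ?thesis by (simp add: subE_eq)
  qed simp
  have "subE (Some R) u M = EV (edge R) (Suc k) u (\<lambda>x. M (u @ x))" using v k by (simp add: subE_eq)
  also have "\<dots> = edge R u True * EV (edge R) k (u @ [True]) (\<lambda>x. M (u @ True # x)) +
     edge R u False * EV (edge R) k (u @ [False]) (\<lambda>x. M (u @ False # x))" by (simp add: EV_Suc)
  also have "\<dots> = edge R u True * subE (Some R) (u @ [True]) M + edge R u False * subE (Some R) (u @ [False]) M"
    unfolding t by simp
  finally show ?thesis .
qed

locale condset =
  fixes R :: proto and M :: "bool list \<Rightarrow> real"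
  assumes w: "wp R" and Mb: "\<And>l. 0 \<le> M l \<and> M l \<le> 1" and E1: "expect (Some R) M \<noteq> 1"
begin

abbreviation "S u \<equiv> subE (Some R) u M"
abbreviation "E \<equiv> expect (Some R) M"

definition R' where "R' = R\<lparr>edge := (\<lambda>u b. if S u = 1 then 0
                  else edge R u b * (1 - S (u @ [b])) / (1 - S u))\<rparr>"

lemma cond_eq: "cond (Some R) M = Some R'"
  using E1 by (simp add: cond_def R'_def)

lemma R'_simps[simp]: "rounds R' = rounds R" "ctrlA R' = ctrlA R" "outp R' = outp R"
  "edge R' u b = (if S u = 1 then 0 else edge R u b * (1 - S (u @ [b])) / (1 - S u))"
  by (simp_all add: R'_def)

lemma Sb: "0 \<le> S u" "S u \<le> 1" using S_bounds[OF w Mb] by auto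

lemma Elt1: "E < 1"
proof -
  have "E \<le> 1" using expect_le1[OF w, of M] Mb by auto
  then show ?thesis using E1 by simp
qed

lemma S_child1:
  assumes l: "length u < rounds R" and Su: "S u = 1" and eb: "edge R u b \<noteq> 0"
  shows "S (u @ [b]) = 1"
proof -
  have v: "vprob R u \<noteq> 0" using Su by (auto simp: S_zero)
  have s: "edge R u True + edge R u False = 1" using wp_sum1[OF w l v] .
  have rec: "S u = edge R u True * S (u @ [True]) + edge R u False * S (u @ [False])" using S_rec[OF w l v] .
  have e0: "0 \<le> edge R u c" for c using wp_nonneg[OF w l] .
  have m: "edge R u c * S (u @ [c]) \<le> edge R u c" for c using Sb[of "u @ [c]"] e0[of c] by (simp add: mult_left_le)
  show ?thesis
  proof (rule ccontr)
    assume "S (u @ [b]) \<noteq> 1"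
    then have "S (u @ [b]) < 1" using Sb[of "u @ [b]"] by simp
    moreover have "0 < edge R u b" using eb e0[of b] by simp
    ultimately have "edge R u b * S (u @ [b]) < edge R u b" by simp
    then show False using m[of "\<not> b"] rec s Su by (cases b) auto
  qed
qed

lemma vprob_R': "length u \<le> rounds R \<Longrightarrow> vprob R' u * (1 - E) = vprob R u * (1 - S u)"
proof (induction u rule: rev_induct)
  case Nil
  then show ?case by (simp add: vprob_def S_nil)
next
  case (snoc b u)
  have l: "length u < rounds R" using snoc.prems by simp
  have IH: "vprob R' u * (1 - E) = vprob R u * (1 - S u)" using snoc.IH snoc.prems by simp
  have E1': "1 - E \<noteq> 0" using Elt1 by simp
  show ?case
  proof (cases "vprob R u = 0")
    case True
    then have "vprob R' u = 0" using IH E1' by simp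
    then show ?thesis using True by (simp add: vprob_snoc)
  next
    case v: False
    show ?thesis
    proof (cases "S u = 1")
      case True
      have "vprob R (u @ [b]) * (1 - S (u @ [b])) = 0"
      proof (cases "edge R u b = 0")
        case False
        then show ?thesis using S_child1[OF l True False] by simp
      qed (simp add: vprob_snoc)
      then show ?thesis using True by (simp add: vprob_snoc)
    next
      case False
      have ne: "1 - S u \<noteq> 0" using False by simp
      have "vprob R' (u @ [b]) * (1 - E) = (vprob R' u * (1 - E)) * (edge R u b * (1 - S (u @ [b])) / (1 - S u))"
        using False by (simp add: vprob_snoc)
      also have "\<dots> = vprob R u * edge R u b * (1 - S (u @ [b]))"
        unfolding IH using ne by (simp add: field_simps)
      finally show ?thesis by (simp add: vprob_snoc)
    qed
  qed
qed

lemma wp_R': "wp R'"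
  unfolding wp_def
proof (intro allI impI conjI)
  fix u :: "bool list" and b
  assume l': "length u < rounds R'"
  then have l: "length u < rounds R" by simp
  have e0: "0 \<le> edge R u c" for c using wp_nonneg[OF w l] .
  show "0 \<le> edge R' u b"
    using e0[of b] Sb[of u] Sb[of "u @ [b]"] by (auto intro!: divide_nonneg_pos mult_nonneg_nonneg)
  have one: "edge R' u True + edge R' u False = 1" if v: "vprob R u \<noteq> 0" and Su: "S u \<noteq> 1"
  proof -
    have s: "edge R u True + edge R u False = 1" using wp_sum1[OF w l v] .
    have rec: "S u = edge R u True * S (u @ [True]) + edge R u False * S (u @ [False])" using S_rec[OF w l v] .
    have ne: "1 - S u \<noteq> 0" using Su by simp
    have "edge R' u True + edge R' u False =
       (edge R u True * (1 - S (u @ [True])) + edge R u False * (1 - S (u @ [False]))) / (1 - S u)"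
      using Su by (simp add: add_divide_distrib)
    also have "edge R u True * (1 - S (u @ [True])) + edge R u False * (1 - S (u @ [False])) = 1 - S u"
      using rec s by (simp add: algebra_simps)
    finally show ?thesis using ne by simp
  qed
  show "edge R' u True + edge R' u False \<le> 1"
  proof (cases "S u = 1")
    case False
    show ?thesis
    proof (cases "vprob R u = 0")
      case True
      have "vprob R (u @ [c]) = 0" for c using True by (simp add: vprob_snoc)
      then have "S (u @ [c]) = 0" for c by (simp add: S_zero)
      then show ?thesis using True wp_le1[OF w l] by (simp add: S_zero)
    next
      case False
      then show ?thesis using one \<open>S u \<noteq> 1\<close> by simp
    qed
  qed simp
  assume "vprob R' u \<noteq> 0"
  then have "vprob R' u * (1 - E) \<noteq> 0" using Elt1 by simp
  then have "vprob R u * (1 - S u) \<noteq> 0" using vprob_R'[of u] l by simp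
  then show "edge R' u True + edge R' u False = 1" using one by simp
qed

lemma leaf_R': "length l = rounds R \<Longrightarrow> vprob R' l * (1 - E) = vprob R l * (1 - M l)"
  using vprob_R'[of l] S_leaf[of l R M] by (cases "vprob R l = 0") auto

lemma expect_R': "expect (Some R') f * (1 - E) = expect (Some R) (\<lambda>l. f l * (1 - M l))"
proof -
  have "expect (Some R') f * (1 - E) = (\<Sum>l\<in>leaves R. vprob R' l * f l * (1 - E))"
    unfolding expect_Some_sum[of R' f] sum_distrib_right by (simp add: leaves_def)
  also have "\<dots> = (\<Sum>l\<in>leaves R. vprob R l * (f l * (1 - M l)))"
  proof (rule sum.cong)
    fix l assume "l \<in> leaves R"
    then have eq: "vprob R' l * (1 - E) = vprob R l * (1 - M l)" using leaf_R' by (simp add: leaves_def)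
    have "vprob R' l * f l * (1 - E) = f l * (vprob R' l * (1 - E))" by (simp only: mult_ac)
    also have "\<dots> = f l * (vprob R l * (1 - M l))" by (simp only: eq)
    also have "\<dots> = vprob R l * (f l * (1 - M l))" by (simp only: mult_ac)
    finally show "vprob R' l * f l * (1 - E) = vprob R l * (f l * (1 - M l))" .
  qed simp
  finally show ?thesis by (simp only: expect_Some_sum)
qed

lemma supp_R': "{l. length l = rounds R' \<and> vprob R' l \<noteq> 0} \<subseteq> {l. length l = rounds R \<and> vprob R l \<noteq> 0}"
proof
  fix l assume "l \<in> {l. length l = rounds R' \<and> vprob R' l \<noteq> 0}"
  then have a: "length l = rounds R" "vprob R' l \<noteq> 0" by auto
  then have "vprob R' l * (1 - E) \<noteq> 0" using Elt1 by simp
  then have "vprob R l \<noteq> 0" using leaf_R'[OF a(1)] by auto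
  then show "l \<in> {l. length l = rounds R \<and> vprob R l \<noteq> 0}" using a by simp
qed

lemma supp_R'_less:
  assumes "length l0 = rounds R" "vprob R l0 \<noteq> 0" "M l0 = 1"
  shows "card {l. length l = rounds R' \<and> vprob R' l \<noteq> 0} < card {l. length l = rounds R \<and> vprob R l \<noteq> 0}"
proof (rule psubset_card_mono)
  show "finite {l. length l = rounds R \<and> vprob R l \<noteq> 0}" using finite_len[of "rounds R"] by (rule rev_finite_subset) auto
  have "vprob R' l0 = 0" using leaf_R'[OF assms(1)] assms(3) Elt1 by simp
  then show "{l. length l = rounds R' \<and> vprob R' l \<noteq> 0} \<subset> {l. length l = rounds R \<and> vprob R l \<noteq> 0}"
    using supp_R' assms by auto
qed

lemma E0_S0: "E = 0 \<Longrightarrow> length u \<le> rounds R \<Longrightarrow> S u = 0"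
proof (induction u rule: rev_induct)
  case Nil
  then show ?case by (simp add: S_nil)
next
  case (snoc b u)
  have l: "length u < rounds R" using snoc.prems by simp
  have S0: "S u = 0" using snoc by simp
  show ?case
  proof (cases "vprob R (u @ [b]) = 0")
    case False
    then have v: "vprob R u \<noteq> 0" and eb: "edge R u b \<noteq> 0" by (auto simp: vprob_snoc)
    have rec: "S u = edge R u True * S (u @ [True]) + edge R u False * S (u @ [False])" using S_rec[OF w l v] .
    have e0: "0 \<le> edge R u c" for c using wp_nonneg[OF w l] .
    have p: "0 \<le> edge R u c * S (u @ [c])" for c using e0[of c] Sb[of "u @ [c]"] by simp
    have z: "edge R u True * S (u @ [True]) = 0" "edge R u False * S (u @ [False]) = 0"
      using rec S0 p[of True] p[of False] by linarith+
    have "edge R u b * S (u @ [b]) = 0" using z by (cases b) auto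
    then show ?thesis using eb by simp
  qed (simp add: S_zero)
qed

end




definition agree :: "proto \<Rightarrow> proto \<Rightarrow> bool" where
  "agree P P' \<longleftrightarrow> rounds P = rounds P' \<and> ctrlA P = ctrlA P' \<and> outp P = outp P' \<and>
     (\<forall>u. length u < rounds P \<longrightarrow> edge P u = edge P' u)"

lemma agree_expect: "agree P P' \<Longrightarrow> expect (Some P) f = expect (Some P') f"
  unfolding expect_Some agree_def by (auto intro!: EV_cong_g)

lemma agree_sh: "agree P P' \<Longrightarrow> agree (sh P [c]) (sh P' [c])"
  unfolding agree_def by auto

lemma agree_DD: "agree P P' \<Longrightarrow> DD isA P = DD isA P'"
proof (induction "rounds P" arbitrary: P P')
  case 0
  then show ?case by (auto simp: agree_def fun_eq_iff DD_0)
next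
  case (Suc n)
  have r: "rounds P = Suc n" using Suc.hyps(2) by simp
  have r': "rounds P' = Suc n" using Suc.prems r by (simp add: agree_def)
  have IH: "DD isA (sh P [c]) = DD isA (sh P' [c])" for c
    using Suc.hyps(1)[of "sh P [c]" "sh P' [c]"] agree_sh[OF Suc.prems] r by simp
  have ed: "edge P [] = edge P' []" using Suc.prems r by (simp add: agree_def)
  have ct: "ctrlA P = ctrlA P'" using Suc.prems by (simp add: agree_def)
  have mu: "muD isA P c = muD isA P' c" for c
    unfolding muD_def IH ed using agree_expect[OF agree_sh[OF Suc.prems]] by simp
  show ?case
    by (rule ext) (simp only: DD_Suc[OF r] DD_Suc[OF r'] IH ed ct mu)
qed

context condset
begin

lemma agree_R': "E = 0 \<Longrightarrow> agree R R'"
  unfolding agree_def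
proof (intro conjI allI impI)
  fix u :: "bool list" assume E0: "E = 0" and l: "length u < rounds R"
  have "S u = 0" "S (u @ [b]) = 0" for b using E0_S0[OF E0] l by auto
  then show "edge R u = edge R' u" by (simp add: fun_eq_iff)
qed simp_all

end

definition okQ :: "nat \<Rightarrow> proto option \<Rightarrow> bool" where
  "okQ m Q \<longleftrightarrow> (case Q of None \<Rightarrow> True | Some R \<Rightarrow> wp R \<and> rounds R = m)"

lemma vprob_nonneg_leaf: "wp P \<Longrightarrow> length l \<le> rounds P \<Longrightarrow> 0 \<le> vprob P l"
proof -
  assume w: "wp P" and l: "length l \<le> rounds P"
  show ?thesis unfolding vprob_pf
  proof (rule pf_nonneg)
    fix v :: "bool list" and b assume "length v < length l"
    then show "0 \<le> edge P ([] @ v) b" using wp_nonneg[OF w, of v b] l by simp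
  qed
qed

lemma E1_zero:
  assumes w: "wp R" and Mb: "\<And>l. 0 \<le> M l \<and> M l \<le> 1" and E: "expect (Some R) M = 1"
  shows "expect (Some R) (\<lambda>l. f l * (1 - M l)) = 0"
proof -
  have t: "(\<Sum>l\<in>leaves R. vprob R l * 1) = 1" using wp_total[OF w] by (simp only: expect_Some_sum)
  have e: "(\<Sum>l\<in>leaves R. vprob R l * M l) = 1" using E by (simp only: expect_Some_sum)
  have "(\<Sum>l\<in>leaves R. vprob R l * (1 - M l)) = (\<Sum>l\<in>leaves R. vprob R l * 1) - (\<Sum>l\<in>leaves R. vprob R l * M l)"
    by (simp only: right_diff_distrib sum_subtractf)
  then have z: "(\<Sum>l\<in>leaves R. vprob R l * (1 - M l)) = 0" unfolding t e by simp
  have fin: "finite (leaves R)" by (simp add: leaves_def finite_len)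
  have nn: "\<forall>l\<in>leaves R. 0 \<le> vprob R l * (1 - M l)"
  proof
    fix l assume "l \<in> leaves R"
    then have "0 \<le> vprob R l" using vprob_nonneg_leaf[OF w] by (simp add: leaves_def)
    moreover have "0 \<le> 1 - M l" using Mb[of l] by simp
    ultimately show "0 \<le> vprob R l * (1 - M l)" by simp
  qed
  have z2: "\<forall>l\<in>leaves R. vprob R l * (1 - M l) = 0"
    using iffD1[OF sum_nonneg_eq_0_iff[OF fin, of "\<lambda>l. vprob R l * (1 - M l)"]] nn z by simp
  have "(\<Sum>l\<in>leaves R. vprob R l * (f l * (1 - M l))) = (\<Sum>l\<in>leaves R. f l * (vprob R l * (1 - M l)))"
    by (simp only: mult_ac)
  also have "\<dots> = 0" by (rule sum.neutral) (use z2 in auto)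
  finally show ?thesis by (simp only: expect_Some_sum)
qed

lemma cond_step:
  assumes ok: "okQ m Q" and Mb: "\<And>l. 0 \<le> M l \<and> M l \<le> 1"
  shows "okQ m (cond Q M) \<and> (\<forall>f. expect (cond Q M) f * (1 - expect Q M) = expect Q (\<lambda>l. f l * (1 - M l)))"
proof (cases Q)
  case None
  then show ?thesis by (simp add: cond_def okQ_def)
next
  case (Some R)
  have w: "wp R" and r: "rounds R = m" using ok Some by (auto simp: okQ_def)
  show ?thesis
  proof (cases "expect (Some R) M = 1")
    case True
    then show ?thesis using Some E1_zero[OF w Mb True] by (simp add: cond_def okQ_def)
  next
    case False
    interpret cs: condset R M using w Mb False by unfold_locales auto
    show ?thesis using Some cs.cond_eq cs.wp_R' cs.expect_R' r by (simp add: okQ_def)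
  qed
qed

lemma dm_bounds: "okQ m Q \<Longrightarrow> 0 \<le> dom_measure isA Q l \<and> dom_measure isA Q l \<le> 1"
  by (cases Q) (auto simp: okQ_def dom_measure_Some DD_bounds)

lemma step_mult:
  assumes ok: "okQ m Q" and Mb: "\<And>l. 0 \<le> M l \<and> M l \<le> 1"
    and inv: "\<And>f. expect Q f * s = expect (Some P) (\<lambda>l. f l * W l)"
  shows "okQ m (cond Q M) \<and> (\<forall>f. expect (cond Q M) f * (s * (1 - expect Q M)) = expect (Some P) (\<lambda>l. f l * (W l * (1 - M l))))"
proof -
  note cs = cond_step[OF ok Mb]
  have "expect (cond Q M) f * (s * (1 - expect Q M)) = expect (Some P) (\<lambda>l. f l * (W l * (1 - M l)))" for f
  proof -
    have "expect (cond Q M) f * (s * (1 - expect Q M)) = (expect (cond Q M) f * (1 - expect Q M)) * s"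
      by (simp only: mult_ac)
    also have "\<dots> = expect Q (\<lambda>l. f l * (1 - M l)) * s" using cs by simp
    also have "\<dots> = expect (Some P) (\<lambda>l. f l * (1 - M l) * W l)" by (rule inv)
    also have "(\<lambda>l. f l * (1 - M l) * W l) = (\<lambda>l. f l * (W l * (1 - M l)))" by (simp add: fun_eq_iff mult_ac)
    finally show ?thesis .
  qed
  then show ?thesis using cs by simp
qed

lemma PiA_0: "PiA Q 0 = Q" by (simp add: PiA_def)
lemma PiB_eq: "PiB Q j = cond (PiA Q j) (MA (PiA Q j))"
  by (cases j) (simp_all add: PiA_def PiB_def Let_def)
lemma PiA_Suc: "PiA Q (Suc j) = cond (PiB Q j) (MB (PiB Q j))"
  by (simp add: PiA_def PiB_def Let_def)




locale seqP =
  fixes P :: proto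
  assumes prot: "is_protocol P"
begin

definition "QA j = PiA (Some P) j"
definition "QB j = PiB (Some P) j"
definition "a j = expect (QA j) (MA (QA j))"
definition "b j = expect (QB j) (MB (QB j))"
definition "W j l = (\<Prod>t<j. (1 - MA (QA t) l) * (1 - MB (QB t) l))"
definition "s j = (\<Prod>t<j. (1 - a t) * (1 - b t))"

lemma wP: "wp P" using is_protocol_wp[OF prot] .

lemma QA0: "QA 0 = Some P" by (simp add: QA_def PiA_0)
lemma QB_eq: "QB j = cond (QA j) (MA (QA j))" by (simp add: QA_def QB_def PiB_eq)
lemma QA_Suc: "QA (Suc j) = cond (QB j) (MB (QB j))" by (simp add: QA_def QB_def PiA_Suc)

lemma invA: "okQ (rounds P) (QA j) \<and> (\<forall>f. expect (QA j) f * s j = expect (Some P) (\<lambda>l. f l * W j l))"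
proof (induction j)
  case 0
  then show ?case using wP by (simp add: QA0 okQ_def s_def W_def)
next
  case (Suc j)
  have bA: "0 \<le> MA (QA j) l \<and> MA (QA j) l \<le> 1" for l using dm_bounds Suc.IH by blast
  have B: "okQ (rounds P) (QB j) \<and> (\<forall>f. expect (QB j) f * (s j * (1 - a j)) = expect (Some P) (\<lambda>l. f l * (W j l * (1 - MA (QA j) l))))"
    unfolding QB_eq a_def by (rule step_mult) (use Suc.IH bA in auto)
  have bB: "0 \<le> MB (QB j) l \<and> MB (QB j) l \<le> 1" for l using dm_bounds B by blast
  have C: "okQ (rounds P) (QA (Suc j)) \<and> (\<forall>f. expect (QA (Suc j)) f * ((s j * (1 - a j)) * (1 - b j)) =
      expect (Some P) (\<lambda>l. f l * ((W j l * (1 - MA (QA j) l)) * (1 - MB (QB j) l))))"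
    unfolding QA_Suc b_def by (rule step_mult) (use B bB in auto)
  have s: "s (Suc j) = (s j * (1 - a j)) * (1 - b j)" by (simp add: s_def mult.assoc)
  have W: "W (Suc j) l = (W j l * (1 - MA (QA j) l)) * (1 - MB (QB j) l)" for l by (simp add: W_def mult.assoc)
  show ?case using C unfolding s W by simp
qed

lemma okA: "okQ (rounds P) (QA j)" using invA by blast

lemma bA: "0 \<le> MA (QA j) l \<and> MA (QA j) l \<le> 1" using dm_bounds okA by blast

lemma invB: "okQ (rounds P) (QB j) \<and> (\<forall>f. expect (QB j) f * (s j * (1 - a j)) = expect (Some P) (\<lambda>l. f l * (W j l * (1 - MA (QA j) l))))"
  unfolding QB_eq a_def by (rule step_mult) (use invA bA in auto)

lemma okB: "okQ (rounds P) (QB j)" using invB by blast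

lemma bB: "0 \<le> MB (QB j) l \<and> MB (QB j) l \<le> 1" using dm_bounds okB by blast

lemma opt_bounds: "okQ (rounds P) Q \<Longrightarrow> 0 \<le> expect Q (dom_measure isA Q) \<and> expect Q (dom_measure isA Q) \<le> 1"
proof (cases Q)
  case (Some R)
  assume "okQ (rounds P) Q"
  then have "wp R" using Some by (simp add: okQ_def)
  then show ?thesis using Some expect_DD_nonneg[of R isA] expect_DD_le1[of R isA] by (simp add: dom_measure_Some)
qed simp

lemma ab_bounds: "0 \<le> a j" "a j \<le> 1" "0 \<le> b j" "b j \<le> 1"
  using opt_bounds[OF okA[of j], of True] opt_bounds[OF okB[of j], of False] by (auto simp: a_def b_def)

lemma alpha_le: "1 - BestB (QA j) \<le> a j"
proof (cases "QA j")
  case None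
  then show ?thesis by (simp add: Best_def a_def)
next
  case (Some R)
  then have "wp R" using okA[of j] by (simp add: okQ_def)
  then show ?thesis using Best_ge[of R False] Some by (simp add: a_def)
qed

lemma beta_le: "1 - BestA (QB j) \<le> b j"
proof (cases "QB j")
  case None
  then show ?thesis by (simp add: Best_def b_def)
next
  case (Some R)
  then have "wp R" using okB[of j] by (simp add: okQ_def)
  then show ?thesis using Best_ge[of R True] Some by (simp add: b_def)
qed

lemma W_bounds: "0 \<le> W j l" "W j l \<le> 1"
proof -
  have f: "0 \<le> (1 - MA (QA t) l) * (1 - MB (QB t) l) \<and> (1 - MA (QA t) l) * (1 - MB (QB t) l) \<le> 1" for t
    using bA[of t l] bB[of t l] by (auto intro: mult_le_one)
  show "0 \<le> W j l" unfolding W_def using f by (auto intro: prod_nonneg)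
  show "W j l \<le> 1" unfolding W_def using f by (auto intro: prod_le_1)
qed

lemma expect_P_sum: "expect (Some P) (\<lambda>l. \<Sum>j\<in>J. f j l) = (\<Sum>j\<in>J. expect (Some P) (f j))"
  by (simp add: expect_Some EV_sum)

lemma CA_ge: "(\<Sum>j\<le>z. s j * a j) \<le> expect (Some P) (CA (Some P) z)"
proof -
  have "expect (Some P) (CA (Some P) z) = (\<Sum>j\<le>z. expect (Some P) (\<lambda>l. MA (QA j) l * (\<Prod>t<j. 1 - MA (QA t) l)))"
    unfolding CA_def[abs_def] QA_def[symmetric] by (rule expect_P_sum)
  moreover have "s j * a j \<le> expect (Some P) (\<lambda>l. MA (QA j) l * (\<Prod>t<j. 1 - MA (QA t) l))" for j
  proof -
    have "s j * a j = expect (Some P) (\<lambda>l. MA (QA j) l * W j l)"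
      using invA[of j] unfolding a_def by (simp add: mult.commute)
    also have "\<dots> \<le> expect (Some P) (\<lambda>l. MA (QA j) l * (\<Prod>t<j. 1 - MA (QA t) l))"
    proof (rule expect_mono[OF wP])
      fix l :: "bool list"
      have "W j l \<le> (\<Prod>t<j. 1 - MA (QA t) l)" unfolding W_def
        by (rule prod_mono) (use bA bB in \<open>auto intro: mult_left_le\<close>)
      then show "MA (QA j) l * W j l \<le> MA (QA j) l * (\<Prod>t<j. 1 - MA (QA t) l)"
        using bA[of j l] by (intro mult_left_mono) auto
    qed
    finally show ?thesis .
  qed
  ultimately show ?thesis by (simp add: sum_mono)
qed

lemma CB_ge: "(\<Sum>j\<le>z. s j * (1 - a j) * b j) \<le> expect (Some P) (CB (Some P) z)"
proof -
  have "expect (Some P) (CB (Some P) z) = (\<Sum>j\<le>z. expect (Some P) (\<lambda>l. MB (QB j) l * (\<Prod>t<j. 1 - MB (QB t) l)))"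
    unfolding CB_def[abs_def] QB_def[symmetric] by (rule expect_P_sum)
  moreover have "s j * (1 - a j) * b j \<le> expect (Some P) (\<lambda>l. MB (QB j) l * (\<Prod>t<j. 1 - MB (QB t) l))" for j
  proof -
    have "s j * (1 - a j) * b j = expect (Some P) (\<lambda>l. MB (QB j) l * (W j l * (1 - MA (QA j) l)))"
      using invB[of j] unfolding b_def by (simp add: mult.commute)
    also have "\<dots> \<le> expect (Some P) (\<lambda>l. MB (QB j) l * (\<Prod>t<j. 1 - MB (QB t) l))"
    proof (rule expect_mono[OF wP])
      fix l :: "bool list"
      have "W j l \<le> (\<Prod>t<j. 1 - MB (QB t) l)" unfolding W_def
        by (rule prod_mono) (use bA bB in \<open>auto intro: mult_left_le_one_le\<close>)
      moreover have "W j l * (1 - MA (QA j) l) \<le> W j l"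
        using W_bounds[of j l] bA[of j l] by (intro mult_left_le) auto
      ultimately show "MB (QB j) l * (W j l * (1 - MA (QA j) l)) \<le> MB (QB j) l * (\<Prod>t<j. 1 - MB (QB t) l)"
        using bB[of j l] by (intro mult_left_mono) auto
    qed
    finally show ?thesis .
  qed
  ultimately show ?thesis by (simp add: sum_mono)
qed

lemma s_bounds: "0 \<le> s j \<and> s j \<le> 1 \<and> 1 - (\<Sum>t<j. a t + b t) \<le> s j"
proof (induction j)
  case 0
  then show ?case by (simp add: s_def)
next
  case (Suc j)
  define x where "x = (1 - a j) * (1 - b j)"
  have x0: "0 \<le> x" "x \<le> 1" unfolding x_def using ab_bounds[of j] by (auto intro: mult_le_one)
  have x1: "1 - x \<le> a j + b j" unfolding x_def using ab_bounds[of j] by (simp add: algebra_simps)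
  have sS: "s (Suc j) = s j * x" by (simp add: s_def x_def)
  have "s j * (1 - x) \<le> 1 - x" using Suc.IH x0 by (intro mult_left_le_one_le) auto
  then have "s j - (a j + b j) \<le> s j * x" using x1 by (simp add: algebra_simps)
  moreover have "0 \<le> s j * x" "s j * x \<le> 1" using Suc.IH x0 by (auto intro: mult_le_one)
  ultimately show ?case using Suc.IH sS by simp
qed

end




definition Ncnt :: "proto option \<Rightarrow> nat" where
  "Ncnt Q = (case Q of None \<Rightarrow> 0 | Some R \<Rightarrow> card {l. length l = rounds R \<and> vprob R l \<noteq> 0})"

lemma finite_supp: "finite {l :: bool list. length l = n \<and> vprob R l \<noteq> 0}"
  using finite_len[of n] by (rule rev_finite_subset) auto

context seqP
begin

lemma never_none:
  assumes H: "\<And>j. a j < 1 \<and> b j < 1"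
  shows False
proof -
  have step: "\<exists>R. QA j = Some R \<and> wp R \<and> rounds R = rounds P \<and>
     (\<exists>R2. QA (Suc j) = Some R2 \<and> Ncnt (QA (Suc j)) < Ncnt (QA j))"
    if nn: "QA j \<noteq> None" for j
  proof -
    obtain R where R: "QA j = Some R" using nn by auto
    have w: "wp R" and r: "rounds R = rounds P" using okA[of j] R by (auto simp: okQ_def)
    have aj: "a j = expect (Some R) (DD True R)" using R by (simp add: a_def dom_measure_Some)
    have aj1: "expect (Some R) (DD True R) \<noteq> 1" using H[of j] aj by simp
    interpret c1: condset R "DD True R"
    proof
      show "wp R" by (rule w)
      show "0 \<le> DD True R l \<and> DD True R l \<le> 1" for l by (rule DD_bounds[OF w])
      show "expect (Some R) (DD True R) \<noteq> 1" by (rule aj1)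
    qed
    have QB: "QB j = Some c1.R'" using R c1.cond_eq by (simp add: QB_eq dom_measure_Some)
    have w1: "wp c1.R'" using c1.wp_R' .
    have bj: "b j = expect (Some c1.R') (DD False c1.R')" using QB by (simp add: b_def dom_measure_Some)
    have bj1: "expect (Some c1.R') (DD False c1.R') \<noteq> 1" using H[of j] bj by simp
    interpret c2: condset c1.R' "DD False c1.R'"
    proof
      show "wp c1.R'" by (rule w1)
      show "0 \<le> DD False c1.R' l \<and> DD False c1.R' l \<le> 1" for l by (rule DD_bounds[OF w1])
      show "expect (Some c1.R') (DD False c1.R') \<noteq> 1" by (rule bj1)
    qed
    have QA': "QA (Suc j) = Some c2.R'" using QB c2.cond_eq by (simp add: QA_Suc dom_measure_Some)
    have le1: "card {l. length l = rounds c1.R' \<and> vprob c1.R' l \<noteq> 0} \<le> card {l. length l = rounds R \<and> vprob R l \<noteq> 0}"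
      by (rule card_mono[OF finite_supp c1.supp_R'])
    have le2: "card {l. length l = rounds c2.R' \<and> vprob c2.R' l \<noteq> 0} \<le> card {l. length l = rounds c1.R' \<and> vprob c1.R' l \<noteq> 0}"
      by (rule card_mono[OF finite_supp c2.supp_R'])
    have "card {l. length l = rounds c2.R' \<and> vprob c2.R' l \<noteq> 0} < card {l. length l = rounds R \<and> vprob R l \<noteq> 0}"
    proof (cases "0 < a j")
      case True
      then obtain l0 where "length l0 = rounds R" "vprob R l0 \<noteq> 0" "DD True R l0 = 1"
        using DD_one[OF w, of True] aj by auto
      then have "card {l. length l = rounds c1.R' \<and> vprob c1.R' l \<noteq> 0} < card {l. length l = rounds R \<and> vprob R l \<noteq> 0}"
        by (rule c1.supp_R'_less)
      then show ?thesis using le2 by linarith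
    next
      case False
      then have a0: "a j = 0" using ab_bounds[of j] by simp
      have E0: "expect (Some R) (DD True R) = 0" using aj a0 by simp
      have ag: "agree R c1.R'" by (rule c1.agree_R'[OF E0])
      have d: "DD False R = DD False c1.R'" by (rule agree_DD[OF ag])
      have "b j = expect (Some c1.R') (DD False c1.R')" by (rule bj)
      also have "\<dots> = expect (Some R) (DD False c1.R')" by (rule agree_expect[OF ag, symmetric])
      also have "\<dots> = expect (Some R) (DD False R)" by (simp only: d)
      finally have bR: "b j = expect (Some R) (DD False R)" .
      have pos: "0 < expect (Some R) (DD True R) + expect (Some R) (DD (\<not> True) R)" using DD_pos[OF w] .
      have "0 < b j" using pos unfolding bR E0 by simp
      then obtain l0 where "length l0 = rounds c1.R'" "vprob c1.R' l0 \<noteq> 0" "DD False c1.R' l0 = 1"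
        using DD_one[OF w1, of False] bj by auto
      then have "card {l. length l = rounds c2.R' \<and> vprob c2.R' l \<noteq> 0} < card {l. length l = rounds c1.R' \<and> vprob c1.R' l \<noteq> 0}"
        by (rule c2.supp_R'_less)
      then show ?thesis using le1 by linarith
    qed
    then show ?thesis using R w r QA' by (simp add: Ncnt_def)
  qed
  have all: "QA j \<noteq> None \<and> Ncnt (QA j) + j \<le> Ncnt (QA 0)" for j
  proof (induction j)
    case 0
    then show ?case by (simp add: QA0)
  next
    case (Suc j)
    then show ?case using step[of j] by auto
  qed
  show False using all[of "Suc (Ncnt (QA 0))"] by simp
qed

end

theorem lemma3p26:
  fixes P :: proto and c :: real
  assumes "is_protocol P"
    and "0 < c" and "c \<le> 1/2"
  shows "\<exists>z::nat.
     (expect (Some P) (CA (Some P) z) \<ge> c * (1 - 2*c) \<and>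
        (\<Sum>j<z. 1 - BestA (PiB (Some P) j)) < c)
   \<or> (expect (Some P) (CB (Some P) z) \<ge> c * (1 - 2*c) \<and>
        (\<Sum>j\<le>z. 1 - BestB (PiA (Some P) j)) < c)"
proof -
  interpret sq: seqP P using assms(1) by unfold_locales
  let ?A = "\<lambda>k. \<Sum>j\<le>k. sq.a j"
  let ?B = "\<lambda>k. \<Sum>j\<le>k. sq.b j"
  have ex: "\<exists>k. c \<le> ?A k \<or> c \<le> ?B k"
  proof (rule ccontr)
    assume "\<not> ?thesis"
    then have h: "?A k < c \<and> ?B k < c" for k by (simp add: not_le)
    have "sq.a j < 1 \<and> sq.b j < 1" for j
    proof -
      have "sq.a j \<le> ?A j" by (rule member_le_sum) (auto intro: sq.ab_bounds)
      moreover have "sq.b j \<le> ?B j" by (rule member_le_sum) (auto intro: sq.ab_bounds)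
      ultimately show ?thesis using h[of j] assms(3) by linarith
    qed
    then show False using sq.never_none by blast
  qed
  define k where "k = (LEAST k. c \<le> ?A k \<or> c \<le> ?B k)"
  have kP: "c \<le> ?A k \<or> c \<le> ?B k" unfolding k_def using LeastI_ex[OF ex] .
  have before: "?A t < c \<and> ?B t < c" if "t < k" for t
    using not_less_Least[of t "\<lambda>k. c \<le> ?A k \<or> c \<le> ?B k"] that unfolding k_def by (simp add: not_le)
  have Alt: "(\<Sum>j<k. sq.a j) < c" and Blt: "(\<Sum>j<k. sq.b j) < c"
  proof -
    have "(\<Sum>j<k. sq.a j) < c \<and> (\<Sum>j<k. sq.b j) < c"
    proof (cases k)
      case 0
      then show ?thesis using assms(2) by simp
    next
      case (Suc t)
      then show ?thesis using before[of t] by (simp add: lessThan_Suc_atMost)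
    qed
    then show "(\<Sum>j<k. sq.a j) < c" "(\<Sum>j<k. sq.b j) < c" by auto
  qed
  have c2: "0 \<le> 1 - 2 * c" using assms(3) by simp
  have mono_a: "(\<Sum>t<j. sq.a t) \<le> (\<Sum>t<k. sq.a t)" if "j \<le> k" for j
    by (rule sum_mono2) (use that sq.ab_bounds in auto)
  have mono_b: "(\<Sum>t<j. sq.b t) \<le> (\<Sum>t<k. sq.b t)" if "j \<le> k" for j
    by (rule sum_mono2) (use that sq.ab_bounds in auto)
  show ?thesis
  proof (cases "c \<le> ?A k")
    case True
    have sj: "1 - 2 * c \<le> sq.s j" if "j \<le> k" for j
    proof -
      have "1 - (\<Sum>t<j. sq.a t + sq.b t) \<le> sq.s j" using sq.s_bounds by blast
      moreover have "(\<Sum>t<j. sq.a t + sq.b t) = (\<Sum>t<j. sq.a t) + (\<Sum>t<j. sq.b t)" by (rule sum.distrib)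
      ultimately show ?thesis using mono_a[OF that] mono_b[OF that] Alt Blt by linarith
    qed
    have "c * (1 - 2 * c) \<le> (1 - 2 * c) * ?A k" using True c2 by (simp add: mult.commute mult_right_mono)
    also have "\<dots> = (\<Sum>j\<le>k. (1 - 2 * c) * sq.a j)" by (simp add: sum_distrib_left)
    also have "\<dots> \<le> (\<Sum>j\<le>k. sq.s j * sq.a j)"
      by (rule sum_mono) (use sj sq.ab_bounds in \<open>auto intro: mult_right_mono\<close>)
    also have "\<dots> \<le> expect (Some P) (CA (Some P) k)" by (rule sq.CA_ge)
    finally have e: "c * (1 - 2 * c) \<le> expect (Some P) (CA (Some P) k)" .
    have "(\<Sum>j<k. 1 - BestA (PiB (Some P) j)) \<le> (\<Sum>j<k. sq.b j)"
      by (rule sum_mono) (use sq.beta_le in \<open>auto simp: sq.QB_def\<close>)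
    then show ?thesis using e Blt by (intro exI[of _ k]) auto
  next
    case False
    then have AK: "?A k < c" and BK: "c \<le> ?B k" using kP by auto
    have sj: "1 - 2 * c \<le> sq.s j * (1 - sq.a j)" if "j \<le> k" for j
    proof -
      have sb: "0 \<le> sq.s j" "sq.s j \<le> 1" "1 - (\<Sum>t<j. sq.a t + sq.b t) \<le> sq.s j" using sq.s_bounds by auto
      have "sq.s j * sq.a j \<le> sq.a j" using sb sq.ab_bounds[of j] by (intro mult_left_le_one_le) auto
      then have x: "sq.s j - sq.a j \<le> sq.s j * (1 - sq.a j)" by (simp add: algebra_simps)
      have "(\<Sum>t<j. sq.a t + sq.b t) = (\<Sum>t<j. sq.a t) + (\<Sum>t<j. sq.b t)" by (rule sum.distrib)
      moreover have "(\<Sum>t<j. sq.a t) + sq.a j = (\<Sum>t\<le>j. sq.a t)" by (simp add: lessThan_Suc_atMost[symmetric])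
      moreover have "(\<Sum>t\<le>j. sq.a t) \<le> ?A k" by (rule sum_mono2) (use that sq.ab_bounds in auto)
      ultimately show ?thesis using x sb mono_b[OF that] AK Blt by linarith
    qed
    have "c * (1 - 2 * c) \<le> (1 - 2 * c) * ?B k" using BK c2 by (simp add: mult.commute mult_right_mono)
    also have "\<dots> = (\<Sum>j\<le>k. (1 - 2 * c) * sq.b j)" by (simp add: sum_distrib_left)
    also have "\<dots> \<le> (\<Sum>j\<le>k. sq.s j * (1 - sq.a j) * sq.b j)"
      by (rule sum_mono) (use sj sq.ab_bounds in \<open>auto intro: mult_right_mono\<close>)
    also have "\<dots> \<le> expect (Some P) (CB (Some P) k)" by (rule sq.CB_ge)
    finally have e: "c * (1 - 2 * c) \<le> expect (Some P) (CB (Some P) k)" .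
    have "(\<Sum>j\<le>k. 1 - BestB (PiA (Some P) j)) \<le> ?A k"
      by (rule sum_mono) (use sq.alpha_le in \<open>auto simp: sq.QA_def\<close>)
    then show ?thesis using e AK by (intro exI[of _ k]) auto
  qed
qed



end
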